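(* (i) Let $n \ge 4$ be even. For every $\xi \in \mathbb{H} \cap \mathbb{D}$ there exists an ordered sample $x_1 < \dots < x_n$ of reals whose relative position of the maximum likelihood estimate is $\xi$. (ii) Let $n \ge 3$ be odd. Then there exists $\epsilon_n > 0$ such that for every $\xi \in \mathbb{H} \cap B(i, \epsilon_n)$ there is no ordered sample $x_1 < \dots < x_n$ of reals whose relative position of the maximum likelihood estimate is $\xi$.
   Context: $\mathbb{H} = \{\theta\in\mathbb{C}:\Im\theta>0\}$, $\mathbb{D}$ is the open unit disc, and $B(i,\epsilon)$ is the open disc of center $i$ and radius $\epsilon$. For an ordered real sample $x_1<\dots<x_n$ ($n\ge3$), the Cauchy maximum likelihood estimate $\hat\theta$ is the unique maximizer over $\theta=\mu+i\sigma\in\mathbb{H}$ of $\prod_{j=1}^n \frac{\sigma}{\pi((x_j-\mu)^2+\sigma^2)}$; it satisfies $|\hat\theta - (x_1+x_n)/2| \le (x_n-x_1)/2$. The relative position of $\hat\theta$ is $\xi = \frac{2\hat\theta - (x_n + x_1)}{x_n - x_1} \in \mathbb{H}\cap\mathbb{D}$. *)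

theory Defs
  imports "HOL-Analysis.Analysis"
begin

definition cauchy_lik :: "nat \<Rightarrow> (nat \<Rightarrow> real) \<Rightarrow> complex \<Rightarrow> real" where
  "cauchy_lik n x \<theta> =
     (\<Prod>j<n. Im \<theta> / (pi * ((x j - Re \<theta>)\<^sup>2 + (Im \<theta>)\<^sup>2)))"

definition is_cauchy_mle :: "nat \<Rightarrow> (nat \<Rightarrow> real) \<Rightarrow> complex \<Rightarrow> bool" where
  "is_cauchy_mle n x \<theta> \<longleftrightarrow> 0 < Im \<theta> \<and>
     (\<forall>\<eta>. 0 < Im \<eta> \<longrightarrow> cauchy_lik n x \<eta> \<le> cauchy_lik n x \<theta>)"

text \<open>Ordered sample x(0) < x(1) < ... < x(n-1) (indices shifted by one w.r.t. the paper).\<close>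
definition ordered_sample :: "nat \<Rightarrow> (nat \<Rightarrow> real) \<Rightarrow> bool" where
  "ordered_sample n x \<longleftrightarrow> (\<forall>i j. i < j \<longrightarrow> j < n \<longrightarrow> x i < x j)"

definition rel_pos :: "nat \<Rightarrow> (nat \<Rightarrow> real) \<Rightarrow> complex \<Rightarrow> complex" where
  "rel_pos n x \<theta> = (2 * \<theta> - complex_of_real (x 0 + x (n - 1))) / complex_of_real (x (n - 1) - x 0)"

definition mle_rel_pos_is :: "nat \<Rightarrow> (nat \<Rightarrow> real) \<Rightarrow> complex \<Rightarrow> bool" where
  "mle_rel_pos_is n x \<xi> \<longleftrightarrow> (\<exists>\<theta>. is_cauchy_mle n x \<theta> \<and> rel_pos n x \<theta> = \<xi>)"

end

theory Submission
  imports Defs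
begin


lemma prod_split_half:
  fixes h :: "nat \<Rightarrow> real"
  shows "prod h {..<k+k} = prod h {..<k} * prod (\<lambda>i. h (i+k)) {..<k}"
proof -
  have "prod h {0..<k} * prod h {k..<k+k} = prod h {0..<k+k}"
    by (rule prod.atLeastLessThan_concat) auto
  moreover have "prod h {0+k..<k+k} = prod (\<lambda>i. h (i+k)) {0..<k}"
    by (rule prod.shift_bounds_nat_ivl)
  ultimately show ?thesis by (simp add: lessThan_atLeast0)
qed

lemma lagrange_id:
  fixes a b m s :: real
  shows "((a-m)^2+s^2)*((b-m)^2+s^2) = ((a-m)*(b-m)+s^2)^2 + s^2*(b-a)^2"
  by (simp add: power2_eq_square algebra_simps)

lemma pair_bound:
  fixes a b m s :: real
  assumes "s > 0" "a \<noteq> b"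
  shows "(s/(pi*((a-m)^2+s^2))) * (s/(pi*((b-m)^2+s^2))) \<le> 1/(pi^2*(b-a)^2)"
proof -
  have da: "(a-m)^2+s^2 > 0" "(b-m)^2+s^2 > 0" using assms by (auto intro: add_nonneg_pos)
  have ba: "(b-a)^2 > 0" using assms by auto
  have key: "s^2*(b-a)^2 \<le> ((a-m)^2+s^2)*((b-m)^2+s^2)"
    unfolding lagrange_id by simp
  have "(s/(pi*((a-m)^2+s^2))) * (s/(pi*((b-m)^2+s^2))) = s^2 / (pi^2 * (((a-m)^2+s^2)*((b-m)^2+s^2)))"
    by (simp add: power2_eq_square field_simps)
  also have "\<dots> \<le> s^2 / (pi^2 * (s^2*(b-a)^2))"
    using key da ba assms by (intro divide_left_mono mult_left_mono) (auto intro!: mult_pos_pos)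
  also have "\<dots> = 1/(pi^2*(b-a)^2)" using assms by (simp add: field_simps)
  finally show ?thesis .
qed

lemma pair_eq:
  fixes a b m s :: real
  assumes "s > 0" "a \<noteq> b" "(a-m)*(b-m)+s^2 = 0"
  shows "(s/(pi*((a-m)^2+s^2))) * (s/(pi*((b-m)^2+s^2))) = 1/(pi^2*(b-a)^2)"
proof -
  have key: "((a-m)^2+s^2)*((b-m)^2+s^2) = s^2*(b-a)^2"
    unfolding lagrange_id assms(3) by simp
  have "(s/(pi*((a-m)^2+s^2))) * (s/(pi*((b-m)^2+s^2))) = s^2 / (pi^2 * (((a-m)^2+s^2)*((b-m)^2+s^2)))"
    by (simp add: power2_eq_square field_simps)
  also have "\<dots> = 1/(pi^2*(b-a)^2)" unfolding key using assms by (simp add: field_simps)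
  finally show ?thesis .
qed

lemma part1:
  fixes n :: nat and \<xi> :: complex
  assumes n: "n \<ge> 4" "even n" and im: "0 < Im \<xi>" and b: "\<xi> \<in> ball 0 1"
  shows "\<exists>x. ordered_sample n x \<and> mle_rel_pos_is n x \<xi>"
proof -
  obtain k where nk: "n = k + k" using n by (metis evenE mult_2)
  have k2: "k \<ge> 2" using n nk by auto
  define u where "u = Re \<xi>"
  define v where "v = Im \<xi>"
  have v0: "v > 0" using im v_def by simp
  have uv: "u^2 + v^2 < 1"
  proof -
    have "cmod \<xi> < 1" using b by simp
    hence "(cmod \<xi>)^2 < 1" by (simp add: power_less_one_iff abs_square_less_1)
    thus ?thesis unfolding u_def v_def cmod_power2 .
  qed
  have u1: "\<bar>u\<bar> < 1"
  proof -
    have "u^2 < 1" using uv v0 by (smt (verit) zero_less_power)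
    thus ?thesis by (simp add: abs_square_less_1)
  qed
  define g where "g = u - v^2/(1-u)"
  have g1: "g > -1"
  proof -
    have "v^2 < (1+u)*(1-u)" using uv by (simp add: algebra_simps power2_eq_square)
    hence "v^2/(1-u) < 1+u" using u1 by (simp add: divide_simps)
    thus ?thesis unfolding g_def by simp
  qed
  have gu: "g < u" unfolding g_def using u1 v0 by simp
  define L where "L = (\<lambda>i::nat. -1 + (g+1) * real i / real (k-1))"
  define R where "R = (\<lambda>i::nat. u + v^2/(u - L i))"
  define x where "x = (\<lambda>j. if j < k then L j else R (j-k))"
  have k1: "real (k-1) > 0" using k2 by simp
  have Lmono: "L i < L j" if "i < j" for i j
    unfolding L_def using that g1 k1 by (intro add_strict_left_mono divide_strict_right_mono mult_strict_left_mono) auto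
  have Lle: "L i \<le> g" if "i < k" for i
  proof -
    have "real i \<le> real (k-1)" using that by simp
    hence "(g+1) * real i / real (k-1) \<le> (g+1)" using g1 k1 by (simp add: divide_simps)
    thus ?thesis unfolding L_def by simp
  qed
  have Llu: "L i < u" if "i < k" for i using Lle[OF that] gu by simp
  have Rgt: "R i > u" if "i < k" for i unfolding R_def using Llu[OF that] v0 by simp
  have Rmono: "R i < R j" if "i < j" "j < k" for i j
  proof -
    have "0 < u - L j" "u - L j < u - L i" using Llu[of j] Lmono[of i j] that by auto
    hence "v^2/(u - L i) < v^2/(u - L j)" using v0 by (intro divide_strict_left_mono) auto
    thus ?thesis unfolding R_def by simp
  qed
  have pairc: "(L i - u) * (R i - u) + v^2 = 0" if "i < k" for i
    unfolding R_def using Llu[OF that] by (simp add: field_simps)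
  have L0: "L 0 = -1" unfolding L_def by simp
  have Lk: "L (k-1) = g" unfolding L_def using k1 by simp
  have Rk: "R (k-1) = 1" unfolding R_def Lk g_def using u1 v0 by (simp add: field_simps)
  have ord: "ordered_sample n x" unfolding ordered_sample_def
  proof (intro allI impI)
    fix i j assume ij: "i < j" "j < n"
    show "x i < x j"
    proof (cases "j < k")
      case True thus ?thesis using ij Lmono unfolding x_def by auto
    next
      case False
      show ?thesis
      proof (cases "i < k")
        case True
        have "x i < u" using True Llu unfolding x_def by auto
        moreover have "u < x j" using False ij nk Rgt[of "j-k"] unfolding x_def by auto
        ultimately show ?thesis by simp
      next
        case F2: False
        thus ?thesis using False ij nk Rmono[of "i-k" "j-k"] unfolding x_def by auto
      qed
    qed
  qed
  define \<theta> where "\<theta> = \<xi>"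
  have x0: "x 0 = -1" unfolding x_def using k2 L0 by simp
  have xn: "x (n-1) = 1" unfolding x_def using k2 nk Rk by (simp add: Suc_diff_Suc numeral_2_eq_2)
  have rp: "rel_pos n x \<xi> = \<xi>" unfolding rel_pos_def x0 xn by simp
  define F where "F = (\<lambda>t (\<eta>::complex). Im \<eta> / (pi * ((t - Re \<eta>)\<^sup>2 + (Im \<eta>)\<^sup>2)))"
  have lik: "cauchy_lik n x \<eta> = (\<Prod>i<k. F (L i) \<eta> * F (R i) \<eta>)" for \<eta>
  proof -
    have "cauchy_lik n x \<eta> = (\<Prod>j<k+k. F (x j) \<eta>)" unfolding cauchy_lik_def F_def nk by simp
    also have "\<dots> = (\<Prod>i<k. F (x i) \<eta>) * (\<Prod>i<k. F (x (i+k)) \<eta>)" by (rule prod_split_half)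
    also have "\<dots> = (\<Prod>i<k. F (L i) \<eta>) * (\<Prod>i<k. F (R i) \<eta>)" unfolding x_def by simp
    also have "\<dots> = (\<Prod>i<k. F (L i) \<eta> * F (R i) \<eta>)" by (simp add: prod.distrib)
    finally show ?thesis .
  qed
  have LR: "L i \<noteq> R i" if "i < k" for i using Llu[OF that] Rgt[OF that] by simp
  have mle: "is_cauchy_mle n x \<xi>" unfolding is_cauchy_mle_def
  proof (intro conjI allI impI)
    show "0 < Im \<xi>" by fact
    fix \<eta> :: complex assume e: "0 < Im \<eta>"
    show "cauchy_lik n x \<eta> \<le> cauchy_lik n x \<xi>" unfolding lik
    proof (rule prod_mono)
      fix i assume i: "i \<in> {..<k}"
      have "0 \<le> F (L i) \<eta> * F (R i) \<eta>"
      proof -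
        have "0 < pi * ((t - Re \<eta>)\<^sup>2 + (Im \<eta>)\<^sup>2)" for t
          using e by (intro mult_pos_pos pi_gt_zero add_nonneg_pos) auto
        thus ?thesis using e unfolding F_def by (simp add: less_imp_le)
      qed
      have "F (L i) \<eta> * F (R i) \<eta> \<le> 1/(pi^2*(R i - L i)^2)"
        unfolding F_def by (rule pair_bound) (use e LR i in auto)
      also have "\<dots> = F (L i) \<xi> * F (R i) \<xi>"
        unfolding F_def by (rule pair_eq[symmetric]) (use v0 LR i pairc u_def v_def in auto)
      finally have "F (L i) \<eta> * F (R i) \<eta> \<le> F (L i) \<xi> * F (R i) \<xi>" .
      thus "0 \<le> F (L i) \<eta> * F (R i) \<eta> \<and> F (L i) \<eta> * F (R i) \<eta> \<le> F (L i) \<xi> * F (R i) \<xi>" using \<open>0 \<le> F (L i) \<eta> * F (R i) \<eta>\<close> by simp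
    qed
  qed
  show ?thesis using ord mle rp unfolding mle_rel_pos_is_def by blast
qed



lemma term_deriv_m:
  fixes a s m :: real assumes "s > 0"
  shows "((\<lambda>m. ln s - ln pi - ln ((a - m)^2 + s^2)) has_real_derivative (2*(a-m)/((a-m)^2+s^2))) (at m)"
proof -
  have D: "(a-m)^2+s^2 > 0" using assms by (intro add_nonneg_pos) auto
  show ?thesis
    apply (rule DERIV_cong)
    apply (rule derivative_intros D)+
    using D by (simp add: field_simps) (simp only: minus_divide_left minus_diff_eq)
qed

lemma term_deriv_s:
  fixes a s m :: real assumes "s > 0"
  shows "((\<lambda>s. ln s - ln pi - ln ((a - m)^2 + s^2)) has_real_derivative (1 / s - 2 * s / ((a-m)^2+s^2))) (at s)"
proof -
  have D: "(a-m)^2+s^2 > 0" using assms by (intro add_nonneg_pos) auto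
  show ?thesis
    apply (rule DERIV_cong)
    apply (rule derivative_intros assms D)+
    using D assms by (simp add: field_simps)
qed

lemma lik_pos:
  assumes "0 < Im \<eta>" shows "0 < cauchy_lik n x \<eta>"
  unfolding cauchy_lik_def
proof (rule prod_pos)
  fix j assume "j \<in> {..<n}"
  have "0 < pi * ((x j - Re \<eta>)\<^sup>2 + (Im \<eta>)\<^sup>2)"
    using assms by (intro mult_pos_pos pi_gt_zero add_nonneg_pos) auto
  thus "0 < Im \<eta> / (pi * ((x j - Re \<eta>)\<^sup>2 + (Im \<eta>)\<^sup>2))" using assms by simp
qed

lemma ln_lik:
  assumes "0 < s"
  shows "ln (cauchy_lik n x (Complex m s)) = (\<Sum>j<n. ln s - ln pi - ln ((x j - m)^2 + s^2))"
proof -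
  have D: "0 < (x j - m)^2 + s^2" for j using assms by (intro add_nonneg_pos) auto
  have "ln (cauchy_lik n x (Complex m s)) = (\<Sum>j<n. ln (s / (pi * ((x j - m)^2 + s^2))))"
    unfolding cauchy_lik_def using assms D
    by (subst ln_prod) (auto intro!: mult_pos_pos)
  also have "\<dots> = (\<Sum>j<n. ln s - ln pi - ln ((x j - m)^2 + s^2))"
    using assms D by (intro sum.cong refl) (simp add: ln_div ln_mult)
  finally show ?thesis .
qed

lemma stationary:
  assumes "is_cauchy_mle n x \<theta>"
  shows "(\<Sum>j<n. 2*(x j - Re \<theta>)/((x j - Re \<theta>)^2 + (Im \<theta>)^2)) = 0"
    and "(\<Sum>j<n. 1 / Im \<theta> - 2 * Im \<theta> / ((x j - Re \<theta>)^2 + (Im \<theta>)^2)) = 0"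
proof -
  define \<mu> where "\<mu> = Re \<theta>"
  define \<sigma> where "\<sigma> = Im \<theta>"
  have s0: "0 < \<sigma>" using assms unfolding is_cauchy_mle_def \<sigma>_def by simp
  have th: "\<theta> = Complex \<mu> \<sigma>" unfolding \<mu>_def \<sigma>_def by simp
  define l where "l = (\<lambda>m s. (\<Sum>j<n. ln s - ln pi - ln ((x j - m)^2 + s^2)))"
  have le: "l m s \<le> l \<mu> \<sigma>" if "0 < s" for m s
  proof -
    have "cauchy_lik n x (Complex m s) \<le> cauchy_lik n x \<theta>"
      using assms that unfolding is_cauchy_mle_def by auto
    hence "ln (cauchy_lik n x (Complex m s)) \<le> ln (cauchy_lik n x (Complex \<mu> \<sigma>))"
      using lik_pos[of "Complex m s" n x] that th by simp
    thus ?thesis unfolding l_def using ln_lik that s0 by metis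
  qed
  have dm: "((\<lambda>m. l m \<sigma>) has_real_derivative (\<Sum>j<n. 2*(x j - \<mu>)/((x j - \<mu>)^2 + \<sigma>^2))) (at \<mu>)"
    unfolding l_def by (rule DERIV_sum) (rule term_deriv_m[OF s0])
  have ds: "((\<lambda>s. l \<mu> s) has_real_derivative (\<Sum>j<n. 1 / \<sigma> - 2 * \<sigma> / ((x j - \<mu>)^2 + \<sigma>^2))) (at \<sigma>)"
    unfolding l_def by (rule DERIV_sum) (rule term_deriv_s[OF s0])
  show "(\<Sum>j<n. 2*(x j - Re \<theta>)/((x j - Re \<theta>)^2 + (Im \<theta>)^2)) = 0"
    unfolding \<mu>_def[symmetric] \<sigma>_def[symmetric]
    by (rule DERIV_local_max[OF dm, of 1]) (use le s0 in auto)
  show "(\<Sum>j<n. 1 / Im \<theta> - 2 * Im \<theta> / ((x j - Re \<theta>)^2 + (Im \<theta>)^2)) = 0"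
    unfolding \<mu>_def[symmetric] \<sigma>_def[symmetric]
  proof (rule DERIV_local_max[OF ds s0], intro allI impI)
    fix y assume "\<bar>\<sigma> - y\<bar> < \<sigma>"
    hence "0 < y" by linarith
    thus "l \<mu> y \<le> l \<mu> \<sigma>" by (rule le)
  qed
qed



lemma pair_cos:
  fixes a b c g :: real
  assumes "a \<le> b" "b \<le> c" "c - a \<le> g" "g < pi"
  shows "cos (2*b - 2*a) + cos (2*b - 2*c) \<ge> 2 * min 0 (cos g)"
proof -
  have e: "cos (2*b - 2*c) = cos (2*c - 2*b)" by (metis cos_minus minus_diff_eq)
  define C where "C = c - a"
  define d where "d = 2*b - a - c"
  have sum: "cos (2*b - 2*a) + cos (2*b - 2*c) = 2 * cos C * cos d"
  proof -
    have "(2*b - 2*a + (2*c - 2*b)) / 2 = C" "(2*b - 2*a - (2*c - 2*b)) / 2 = d"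
      unfolding C_def d_def by (simp_all add: field_simps)
    thus ?thesis unfolding e cos_plus_cos by simp
  qed
  have C0: "0 \<le> C" "C \<le> g" "C < pi" using assms unfolding C_def by auto
  have dC: "\<bar>d\<bar> \<le> C" using assms unfolding C_def d_def by auto
  show ?thesis
  proof (cases "0 \<le> cos C")
    case True
    have "C \<le> pi/2"
    proof (rule ccontr)
      assume "\<not> C \<le> pi/2"
      hence "cos C < cos (pi/2)" using C0 by (intro cos_monotone_0_pi) auto
      thus False using True by simp
    qed
    hence "0 \<le> cos d" using dC by (intro cos_ge_zero) auto
    hence "0 \<le> 2 * cos C * cos d" using True by simp
    thus ?thesis unfolding sum by linarith
  next
    case False
    have "cos d \<le> 1" by simp
    hence "cos C \<le> cos C * cos d" using False by (simp add: mult_le_cancel_left1)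
    moreover have "cos g \<le> cos C" using C0 assms(4) by (subst cos_mono_le_eq) auto
    ultimately show ?thesis unfolding sum by linarith
  qed
qed

lemma odd_trig:
  fixes \<beta> :: "nat \<Rightarrow> real" and k :: nat
  assumes mono: "\<And>i j. i \<le> j \<Longrightarrow> j \<le> 2*k \<Longrightarrow> \<beta> i \<le> \<beta> j"
    and rng: "\<beta> (2*k) - \<beta> 0 < pi"
    and sc: "(\<Sum>j<2*k+1. cos (2*\<beta> j)) = 0" and ss: "(\<Sum>j<2*k+1. sin (2*\<beta> j)) = 0"
  shows "1 + 2 * real k * min 0 (cos (\<beta> (2*k) - \<beta> 0)) \<le> 0"
proof -
  define n where "n = 2*k+1"
  define f where "f = (\<lambda>j. cos (2*\<beta> k - 2*\<beta> j))"
  define m where "m = min 0 (cos (\<beta> (2*k) - \<beta> 0))"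
  have s0: "(\<Sum>j<n. f j) = 0"
  proof -
    have "(\<Sum>j<n. f j) = (\<Sum>j<n. cos (2*\<beta> k) * cos (2*\<beta> j) + sin (2*\<beta> k) * sin (2*\<beta> j))"
      unfolding f_def cos_diff by simp
    also have "\<dots> = cos (2*\<beta> k) * (\<Sum>j<n. cos (2*\<beta> j)) + sin (2*\<beta> k) * (\<Sum>j<n. sin (2*\<beta> j))"
      by (simp add: sum.distrib sum_distrib_left)
    also have "\<dots> = 0" unfolding n_def sc ss by simp
    finally show ?thesis .
  qed
  have rev: "(\<Sum>j<n. f j) = (\<Sum>j<n. f (2*k - j))"
    using sum.nat_diff_reindex[of "\<lambda>j. f j" n, symmetric] unfolding n_def by simp
  have tot: "(\<Sum>j<n. f j + f (2*k - j)) = 0" using s0 rev by (simp add: sum.distrib)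
  have pb0: "f j + f (2*k - j) \<ge> 2*m" if "j \<le> k" for j
  proof -
    have "cos (2*\<beta> k - 2*\<beta> j) + cos (2*\<beta> k - 2*\<beta> (2*k-j)) \<ge> 2 * min 0 (cos (\<beta> (2*k) - \<beta> 0))"
    proof (rule pair_cos)
      show "\<beta> j \<le> \<beta> k" "\<beta> k \<le> \<beta> (2*k-j)" using that by (auto intro!: mono)
      have "\<beta> (2*k-j) \<le> \<beta> (2*k)" "\<beta> 0 \<le> \<beta> j" using that by (auto intro!: mono)
      thus "\<beta> (2*k-j) - \<beta> j \<le> \<beta> (2*k) - \<beta> 0" by simp
    qed (rule rng)
    thus ?thesis unfolding f_def m_def .
  qed
  have pb: "f j + f (2*k - j) \<ge> 2*m" if "j < n" for j
  proof (cases "j \<le> k")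
    case True thus ?thesis by (rule pb0)
  next
    case False
    hence "2*k - j \<le> k" "2*k - (2*k - j) = j" using that unfolding n_def by auto
    thus ?thesis using pb0[of "2*k-j"] by simp
  qed
  have kin: "k \<in> {..<n}" unfolding n_def by simp
  have "(\<Sum>j<n. f j + f (2*k - j)) = (f k + f (2*k - k)) + (\<Sum>j\<in>{..<n}-{k}. f j + f (2*k - j))"
    by (rule sum.remove[OF _ kin]) simp
  also have "f k + f (2*k - k) = 2" unfolding f_def by simp
  finally have eq: "0 = 2 + (\<Sum>j\<in>{..<n}-{k}. f j + f (2*k - j))" using tot by simp
  define S where "S = (\<Sum>j\<in>{..<n}-{k}. f j + f (2*k - j))"
  have "real (card ({..<n}-{k})) * (2*m) \<le> S"
    unfolding S_def by (rule sum_bounded_below) (use pb in auto)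
  moreover have "card ({..<n}-{k}) = 2*k" using kin unfolding n_def by simp
  moreover have "S = -2" using eq unfolding S_def by linarith
  ultimately have "real (2*k) * (2*m) \<le> -2" by simp
  thus ?thesis unfolding m_def by simp
qed



lemma cos2_arctan: "cos (2 * arctan t) = (1 - t^2) / (1 + t^2)"
proof -
  have p: "0 < 1 + t^2" by (intro add_pos_nonneg) auto
  have "cos (2 * arctan t) = (1/sqrt (1+t^2))^2 - (t / sqrt (1+t^2))^2"
    unfolding cos_double cos_arctan sin_arctan ..
  also have "\<dots> = (1 - t^2) / (1 + t^2)" using p by (simp add: power_divide diff_divide_distrib)
  finally show ?thesis .
qed

lemma sin2_arctan: "sin (2 * arctan t) = 2 * t / (1 + t^2)"
proof -
  have p: "0 < 1 + t^2" by (intro add_pos_nonneg) auto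
  have "sin (2 * arctan t) = 2 * (t / sqrt (1+t^2)) * (1/sqrt (1+t^2))"
    unfolding sin_double cos_arctan sin_arctan ..
  also have "\<dots> = 2 * t / (1 + t^2)" using p
    by (simp add: field_simps)
  finally show ?thesis .
qed

lemma cos_arctan_diff: "cos (arctan a - arctan b) = (1 + a*b) / (sqrt (1+a^2) * sqrt (1+b^2))"
  unfolding cos_diff cos_arctan sin_arctan by (simp add: add_divide_distrib)

lemma min_cos_arctan_diff: "min 0 (1 + a*b) \<le> min 0 (cos (arctan a - arctan b))"
proof (cases "0 \<le> 1 + a*b")
  case True
  thus ?thesis unfolding cos_arctan_diff by simp
next
  case False
  have "1 \<le> sqrt (1+a^2)" "1 \<le> sqrt (1+b^2)" by auto
  hence Q: "1 \<le> sqrt (1+a^2) * sqrt (1+b^2)" by (metis mult_mono' mult_1 zero_le_one)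
  have "1 + a*b \<le> (1 + a*b) / (sqrt (1+a^2) * sqrt (1+b^2))"
    using False Q by (simp add: le_divide_eq)
  thus ?thesis unfolding cos_arctan_diff using False by simp
qed



lemma part2:
  fixes n :: nat assumes n3: "n \<ge> 3" and odd: "odd n"
  shows "\<exists>\<epsilon>>0. \<forall>\<xi>. 0 < Im \<xi> \<longrightarrow> \<xi> \<in> ball \<i> \<epsilon> \<longrightarrow>
               \<not> (\<exists>x. ordered_sample n x \<and> mle_rel_pos_is n x \<xi>)"
proof -
  obtain k where nk: "n = 2*k+1" using odd by (metis oddE)
  have k1: "k \<ge> 1" using n3 nk by simp
  define \<epsilon> where "\<epsilon> = 1 / (4 * real n)"
  have e0: "\<epsilon> > 0" unfolding \<epsilon>_def using n3 by simp
  show ?thesis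
  proof (intro exI[of _ \<epsilon>] conjI e0 allI impI notI)
    fix \<xi> :: complex
    assume im: "0 < Im \<xi>" and bl: "\<xi> \<in> ball \<i> \<epsilon>" and ex: "\<exists>x. ordered_sample n x \<and> mle_rel_pos_is n x \<xi>"
    then obtain x \<theta> where ord: "ordered_sample n x" and mle: "is_cauchy_mle n x \<theta>" and rp: "rel_pos n x \<theta> = \<xi>"
      unfolding mle_rel_pos_is_def by blast
    define \<mu> where "\<mu> = Re \<theta>"
    define \<sigma> where "\<sigma> = Im \<theta>"
    have s0: "0 < \<sigma>" using mle unfolding is_cauchy_mle_def \<sigma>_def by simp
    define s where "s = (\<lambda>j. (x j - \<mu>) / \<sigma>)"
    define \<beta> where "\<beta> = (\<lambda>j. arctan (s j))"
    have xmono: "x i \<le> x j" if "i \<le> j" "j \<le> 2*k" for i j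
      using ord that nk unfolding ordered_sample_def by (cases "i = j") (auto intro: less_imp_le)
    have mono: "\<beta> i \<le> \<beta> j" if "i \<le> j" "j \<le> 2*k" for i j
      unfolding \<beta>_def s_def using xmono[OF that] s0
      by (intro arctan_monotone' divide_right_mono) auto
    have rng: "\<beta> (2*k) - \<beta> 0 < pi"
      unfolding \<beta>_def using arctan_ubound[of "s (2*k)"] arctan_lbound[of "s 0"] by simp
    define D where "D = (\<lambda>j. (x j - \<mu>)^2 + \<sigma>^2)"
    have Dpos: "0 < D j" for j unfolding D_def using s0 by (intro add_nonneg_pos) auto
    have st1: "(\<Sum>j<n. 2*(x j - \<mu>)/D j) = 0" using stationary(1)[OF mle] unfolding D_def \<mu>_def \<sigma>_def .
    have st2: "(\<Sum>j<n. 1 / \<sigma> - 2 * \<sigma> / D j) = 0" using stationary(2)[OF mle] unfolding D_def \<mu>_def \<sigma>_def .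
    have one_s: "1 + (s j)^2 = D j / \<sigma>^2" for j
      unfolding s_def D_def using s0 by (simp add: field_simps power2_eq_square)
    have sc: "(\<Sum>j<2*k+1. cos (2*\<beta> j)) = 0"
    proof -
      have "cos (2*\<beta> j) = - \<sigma> * (1 / \<sigma> - 2 * \<sigma> / D j)" for j
      proof -
        have "cos (2*\<beta> j) = (1 - (s j)^2) / (1 + (s j)^2)" unfolding \<beta>_def by (rule cos2_arctan)
        also have "\<dots> = (\<sigma>^2 - (x j - \<mu>)^2) / D j"
        proof -
          have "1 - (s j)^2 = (\<sigma>^2 - (x j - \<mu>)^2) / \<sigma>^2"
            unfolding s_def using s0 by (simp add: field_simps power2_eq_square)
          thus ?thesis unfolding one_s using s0 Dpos[of j] by simp
        qed
        also have "\<dots> = - \<sigma> * (1 / \<sigma> - 2 * \<sigma> / D j)"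
        proof -
          have "- \<sigma> * (1 / \<sigma> - 2 * \<sigma> / D j) = (2 * \<sigma>^2 - D j) / D j"
            using s0 Dpos[of j] by (simp add: field_simps power2_eq_square)
          moreover have "2 * \<sigma>^2 - D j = \<sigma>^2 - (x j - \<mu>)^2" unfolding D_def by simp
          ultimately show ?thesis by simp
        qed
        finally show ?thesis .
      qed
      hence "(\<Sum>j<2*k+1. cos (2*\<beta> j)) = (\<Sum>j<n. - \<sigma> * (1 / \<sigma> - 2 * \<sigma> / D j))"
        unfolding nk by (intro sum.cong) auto
      also have "\<dots> = - \<sigma> * (\<Sum>j<n. 1 / \<sigma> - 2 * \<sigma> / D j)" by (rule sum_distrib_left[symmetric])
      finally have "(\<Sum>j<2*k+1. cos (2*\<beta> j)) = - \<sigma> * (\<Sum>j<n. 1 / \<sigma> - 2 * \<sigma> / D j)" .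
      thus ?thesis using st2 by simp
    qed
    have ss: "(\<Sum>j<2*k+1. sin (2*\<beta> j)) = 0"
    proof -
      have "sin (2*\<beta> j) = \<sigma> * (2*(x j - \<mu>)/D j)" for j
      proof -
        have "sin (2*\<beta> j) = 2 * s j / (1 + (s j)^2)" unfolding \<beta>_def by (rule sin2_arctan)
        also have "\<dots> = \<sigma> * (2*(x j - \<mu>)/D j)"
          unfolding one_s using s0 Dpos[of j] unfolding s_def
          by (simp add: field_simps power2_eq_square)
        finally show ?thesis .
      qed
      hence "(\<Sum>j<2*k+1. sin (2*\<beta> j)) = (\<Sum>j<n. \<sigma> * (2*(x j - \<mu>)/D j))"
        unfolding nk by (intro sum.cong) auto
      also have "\<dots> = \<sigma> * (\<Sum>j<n. 2*(x j - \<mu>)/D j)" by (rule sum_distrib_left[symmetric])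
      finally have "(\<Sum>j<2*k+1. sin (2*\<beta> j)) = \<sigma> * (\<Sum>j<n. 2*(x j - \<mu>)/D j)" .
      thus ?thesis using st1 by simp
    qed
    have main: "1 + 2 * real k * min 0 (cos (\<beta> (2*k) - \<beta> 0)) \<le> 0"
      by (rule odd_trig[OF mono rng sc ss])
    define P where "P = 1 + s (2*k) * s 0"
    have "min 0 P \<le> min 0 (cos (\<beta> (2*k) - \<beta> 0))"
      unfolding P_def \<beta>_def by (rule min_cos_arctan_diff)
    hence main2: "1 + 2 * real k * min 0 P \<le> 0" using main
      by (smt (verit) mult_left_mono of_nat_0_le_iff)
    define A where "A = x 0"
    define B where "B = x (2*k)"
    have AB: "A < B" unfolding A_def B_def using ord k1 nk unfolding ordered_sample_def by auto
    define h where "h = B - A"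
    have h0: "h > 0" using AB h_def by simp
    have nm1: "n - 1 = 2*k" using nk by simp
    have xi: "\<xi> = (2 * \<theta> - complex_of_real (A + B)) / complex_of_real h"
      using rp unfolding rel_pos_def nm1 A_def B_def h_def by simp
    define u where "u = Re \<xi>"
    define v where "v = Im \<xi>"
    have u: "u = (2*\<mu> - (A+B)) / h" unfolding u_def xi \<mu>_def by simp
    have v: "v = 2*\<sigma> / h" unfolding v_def xi \<sigma>_def by simp
    have dxi: "cmod (\<xi> - \<i>) < \<epsilon>" using bl by (simp add: dist_norm norm_minus_commute)
    have vb: "\<bar>v - 1\<bar> < \<epsilon>" using abs_Im_le_cmod[of "\<xi> - \<i>"] dxi unfolding v_def by simp
    have ub: "\<bar>u\<bar> < \<epsilon>" using abs_Re_le_cmod[of "\<xi> - \<i>"] dxi unfolding u_def by simp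
    have v0: "v > 0" using v s0 h0 by simp
    have Pu: "P = 1 - (1 - u^2) / v^2"
    proof -
      have Bh: "B = A + h" unfolding h_def by simp
      show ?thesis
        unfolding P_def s_def B_def[symmetric] A_def[symmetric] u v Bh using h0 s0
        by (simp add: field_simps power2_eq_square)
    qed
    have n1: "real n \<ge> 3" using n3 by simp
    have vlow: "v > 1 - 1/(4 * real n)" using vb unfolding \<epsilon>_def by linarith
    have v2: "real n * v^2 > real n - 1"
    proof -
      have "(1 - 1/(4 * real n)) > 0" using n1 by (simp add: field_simps)
      hence "v^2 > (1 - 1/(4 * real n))^2" using vlow by (intro power_strict_mono) auto
      moreover have "(1 - 1/(4 * real n))^2 \<ge> 1 - 1/(2 * real n)"
        using n1 by (simp add: power2_eq_square field_simps)
      ultimately have "v^2 > 1 - 1/(2*real n)" by linarith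
      hence "real n * v^2 > real n * (1 - 1/(2*real n))" using n1 by simp
      also have "real n * (1 - 1/(2*real n)) = real n - 1/2" using n1 by (simp add: field_simps)
      finally show ?thesis by linarith
    qed
    have "2 * real k * P > -1"
    proof -
      have rk: "real n = 2 * real k + 1" using nk by simp
      have "2 * real k * (1 - u^2) \<le> 2 * real k" using k1 by (simp add: mult_le_cancel_left1)
      also have "\<dots> < (2 * real k + 1) * v^2" using v2 rk by simp
      finally have "2 * real k * (1 - u^2) < (2 * real k + 1) * v^2" .
      hence "2 * real k * (1 - u^2) / v^2 < 2 * real k + 1" using v0 by (simp add: divide_less_eq)
      thus ?thesis unfolding Pu by (simp add: algebra_simps)
    qed
    thus False using main2 by (cases "0 \<le> P") auto
  qed
qed


theorem mainTheorem11:
  shows "(\<forall>n::nat. n \<ge> 4 \<longrightarrow> even n \<longrightarrow>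
            (\<forall>\<xi>. 0 < Im \<xi> \<longrightarrow> \<xi> \<in> ball 0 1 \<longrightarrow>
               (\<exists>x. ordered_sample n x \<and> mle_rel_pos_is n x \<xi>)))
       \<and> (\<forall>n::nat. n \<ge> 3 \<longrightarrow> odd n \<longrightarrow>
            (\<exists>\<epsilon>>0. \<forall>\<xi>. 0 < Im \<xi> \<longrightarrow> \<xi> \<in> ball \<i> \<epsilon> \<longrightarrow>
               \<not> (\<exists>x. ordered_sample n x \<and> mle_rel_pos_is n x \<xi>)))"
  using part1 part2 by blast

end
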